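(* Let $N=2^n$ and let $\mathcal{A}=P(U_\omega)$ be an $N\times N$ diagonal matrix, where $P\in\mathbb{C}[x]$ has $\deg P=d$ and $|P(x)|^2\le c$ for all $x\in\mathbb{T}$. Then $\mathcal{A}/\sqrt{c}$ can be implemented (as the top-left block, with respect to one ancilla qubit, of a unitary circuit) using $\mathcal{O}(d\log N)$ 1- and 2-qubit gates.
   Context: $\mathbb{T}=\{x\in\mathbb{C}:|x|=1\}$, $\omega_N=e^{2\pi i/N}$, and $U_\omega=\sum_{j=0}^{N-1}\omega_N^j|j\rangle\langle j|$ where $|j\rangle$ is the computational basis state given by the binary representation of $j$ on $n=\log N$ qubits. Gates are arbitrary 1- and 2-qubit unitaries. *)

theory Defs
  imports Complex_Main "HOL-Computational_Algebra.Polynomial"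
begin

text \<open>Complex square matrices of dimension D are represented as functions
  nat => nat => complex; only entries with indices below D are meaningful.\<close>

type_synonym cmat = "nat \<Rightarrow> nat \<Rightarrow> complex"

definition mmult :: "nat \<Rightarrow> cmat \<Rightarrow> cmat \<Rightarrow> cmat" where
  "mmult D A B = (\<lambda>i j. \<Sum>k<D. A i k * B k j)"

definition idmat :: "nat \<Rightarrow> cmat" where
  "idmat D = (\<lambda>i j. if i = j \<and> i < D then 1 else 0)"

fun mpow :: "nat \<Rightarrow> cmat \<Rightarrow> nat \<Rightarrow> cmat" where
  "mpow D M 0 = idmat D"
| "mpow D M (Suc k) = mmult D M (mpow D M k)"

definition poly_mat :: "nat \<Rightarrow> complex poly \<Rightarrow> cmat \<Rightarrow> cmat" where
  "poly_mat D P M = (\<lambda>i j. \<Sum>k\<le>degree P. coeff P k * mpow D M k i j)"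

definition unitary_mat :: "nat \<Rightarrow> cmat \<Rightarrow> bool" where
  "unitary_mat D U \<longleftrightarrow>
     (\<forall>i<D. \<forall>j<D. (\<Sum>k<D. cnj (U k i) * U k j) = (if i = j then 1 else 0))"

definition omega :: "nat \<Rightarrow> complex" where
  "omega N = exp (2 * of_real pi * \<i> / of_nat N)"

definition U_omega :: "nat \<Rightarrow> cmat" where
  "U_omega N = (\<lambda>i j. if i = j \<and> i < N then omega N ^ j else 0)"

definition qbit :: "nat \<Rightarrow> nat \<Rightarrow> nat" where
  "qbit x i = (x div 2 ^ i) mod 2"

datatype gate = G1 nat cmat | G2 nat nat cmat

fun valid_gate :: "nat \<Rightarrow> gate \<Rightarrow> bool" where
  "valid_gate m (G1 q U) \<longleftrightarrow> q < m \<and> unitary_mat 2 U"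
| "valid_gate m (G2 q1 q2 U) \<longleftrightarrow> q1 < m \<and> q2 < m \<and> q1 \<noteq> q2 \<and> unitary_mat 4 U"

fun gate_mat :: "nat \<Rightarrow> gate \<Rightarrow> cmat" where
  "gate_mat m (G1 q U) = (\<lambda>x y.
     if x < 2 ^ m \<and> y < 2 ^ m \<and> (\<forall>i. i \<noteq> q \<longrightarrow> qbit x i = qbit y i)
     then U (qbit x q) (qbit y q) else 0)"
| "gate_mat m (G2 q1 q2 U) = (\<lambda>x y.
     if x < 2 ^ m \<and> y < 2 ^ m \<and> (\<forall>i. i \<noteq> q1 \<and> i \<noteq> q2 \<longrightarrow> qbit x i = qbit y i)
     then U (2 * qbit x q1 + qbit x q2) (2 * qbit y q1 + qbit y q2) else 0)"

text \<open>The unitary of a circuit g1 g2 ... gk (applied in list order, i.e. U = G_k ... G_1).\<close>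
definition circuit_mat :: "nat \<Rightarrow> gate list \<Rightarrow> cmat" where
  "circuit_mat m gs = foldl (\<lambda>M g. mmult (2 ^ m) (gate_mat m g) M) (idmat (2 ^ m)) gs"

text \<open>W (on n+1 qubits, ancilla = most significant qubit n) block-encodes the
  2^n x 2^n matrix B: the top-left block of W (ancilla in |0>) equals B.\<close>
definition top_left_block :: "nat \<Rightarrow> cmat \<Rightarrow> cmat \<Rightarrow> bool" where
  "top_left_block n W B \<longleftrightarrow> (\<forall>j<2 ^ n. \<forall>k<2 ^ n. W j k = B j k)"

end

theory Submission
  imports Defs "HOL-Computational_Algebra.Fundamental_Theorem_Algebra"
begin


lemma poly_sum_le:
  fixes p :: "complex poly"
  assumes "degree p \<le> m"
  shows "poly p x = (\<Sum>i\<le>m. coeff p i * x ^ i)"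
proof -
  have "(\<Sum>i\<le>degree p. coeff p i * x ^ i) = (\<Sum>i\<le>m. coeff p i * x ^ i)"
    by (rule sum.mono_neutral_left) (use assms in \<open>auto, metis coeff_eq_0 mult_zero_left not_le\<close>)
  then show ?thesis by (simp add: poly_altdef)
qed

definition crefl :: "nat \<Rightarrow> complex poly \<Rightarrow> complex poly" where
  "crefl m p = (\<Sum>k\<le>m. monom (cnj (coeff p k)) (m - k))"

lemma coeff_crefl: "coeff (crefl m p) k = (if k \<le> m then cnj (coeff p (m - k)) else 0)"
proof -
  have "coeff (crefl m p) k = (\<Sum>j\<le>m. if m - j = k then cnj (coeff p j) else 0)"
    unfolding crefl_def coeff_sum coeff_monom by (simp add: eq_commute)
  also have "\<dots> = (\<Sum>j\<le>m. if j = m - k \<and> k \<le> m then cnj (coeff p j) else 0)"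
    by (rule sum.cong) auto
  also have "\<dots> = (if k \<le> m then cnj (coeff p (m - k)) else 0)"
    by (cases "k \<le> m") (simp_all add: sum.delta)
  finally show ?thesis .
qed

lemma degree_crefl: "degree (crefl m p) \<le> m"
  by (rule degree_le) (simp add: coeff_crefl)

lemma poly_crefl:
  assumes "degree p \<le> m" "w \<noteq> 0"
  shows "poly (crefl m p) w = w ^ m * cnj (poly p (1 / cnj w))"
proof -
  have "poly (crefl m p) w = (\<Sum>k\<le>m. cnj (coeff p k) * w ^ (m - k))"
    unfolding crefl_def poly_sum poly_monom ..
  also have "\<dots> = (\<Sum>k\<le>m. w ^ m * (cnj (coeff p k) * (1 / w) ^ k))"
    by (rule sum.cong) (use assms in \<open>auto simp: power_diff power_one_over\<close>)
  also have "\<dots> = w ^ m * cnj (poly p (1 / cnj w))"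
    by (simp add: poly_sum_le[OF assms(1)] sum_distrib_left)
  finally show ?thesis .
qed

lemma T_inv: "cmod z = 1 \<Longrightarrow> 1 / cnj z = z"
  by (metis complex_div_cnj div_by_1 divide_divide_eq_right mult.commute nonzero_mult_div_cancel_right one_power2 zero_neq_one of_real_1 norm_zero)

lemma T_cnj: "cmod z = 1 \<Longrightarrow> cnj z = 1 / z"
  by (metis T_inv complex_cnj_divide complex_cnj_one complex_cnj_cnj)

lemma poly_crefl_T:
  assumes "degree p \<le> m" "cmod z = 1"
  shows "poly (crefl m p) z = z ^ m * cnj (poly p z)"
proof -
  have "z \<noteq> 0" using assms by auto
  then show ?thesis using poly_crefl[OF assms(1)] T_inv[OF assms(2)] by simp
qed

lemma T_infinite: "infinite {z::complex. cmod z = 1}"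
proof -
  define f where "f = (\<lambda>n::nat. (of_nat n + \<i>) / (of_nat n - \<i>))"
  have ne: "of_nat n - \<i> \<noteq> 0" for n
    by (auto simp: complex_eq_iff)
  have "inj f"
  proof
    fix m n assume "f m = f n"
    then have "(of_nat m + \<i>) * (of_nat n - \<i>) = (of_nat n + \<i>) * (of_nat m - \<i>)"
      unfolding f_def using ne by (simp add: field_simps)
    then have "2 * \<i> * (of_nat m - of_nat n) = 0" by (simp add: algebra_simps)
    then show "m = n" by simp
  qed
  moreover have "range f \<subseteq> {z. cmod z = 1}"
  proof
    fix z assume "z \<in> range f"
    then obtain n where z: "z = f n" by auto
    have "cmod (of_nat n + \<i>) = cmod (of_nat n - \<i>)"
      by (simp add: cmod_def)
    then show "z \<in> {z. cmod z = 1}" using ne[of n] by (simp add: z f_def norm_divide)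
  qed
  ultimately show ?thesis
    by (meson finite_subset infinite_UNIV_nat finite_imageD)
qed

lemma poly_T_zero:
  assumes "\<And>z. cmod z = 1 \<Longrightarrow> poly p z = 0"
  shows "p = 0"
proof (rule ccontr)
  assume "p \<noteq> 0"
  then have "finite {z. poly p z = 0}" by (rule poly_roots_finite)
  moreover have "{z::complex. cmod z = 1} \<subseteq> {z. poly p z = 0}" using assms by auto
  ultimately show False using T_infinite finite_subset by blast
qed



lemma T_exp: "cmod a = 1 \<Longrightarrow> cmod (a * exp (\<i> * of_real t)) = 1"
  by (simp add: norm_mult)

lemma limit_pt:
  fixes S :: "complex poly"
  assumes a: "cmod a = 1"
  and hyp: "\<And>z. cmod z = 1 \<Longrightarrow> z \<noteq> a \<Longrightarrow> Im (poly S z / z^m) = 0 \<and> 0 \<le> Re (poly S z / z^m)"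
  shows "Im (poly S a / a^m) = 0 \<and> 0 \<le> Re (poly S a / a^m)"
proof -
  define h where "h = (\<lambda>\<theta>::real. poly S (a * exp (\<i> * of_real \<theta>)) / (a * exp (\<i> * of_real \<theta>))^m)"
  define th where "th = (\<lambda>k::nat. inverse (real (Suc k)))"
  have a0: "a \<noteq> 0" using a by auto
  have cont: "isCont h 0" unfolding h_def using a0 by (intro continuous_intros) auto
  have lim: "(\<lambda>k. h (th k)) \<longlonglongrightarrow> h 0"
    using isCont_tendsto_compose[OF cont LIMSEQ_inverse_real_of_nat] th_def by simp
  have h0: "h 0 = poly S a / a^m" by (simp add: h_def)
  have hprop: "Im (h (th k)) = 0 \<and> 0 \<le> Re (h (th k))" for k
  proof -
    have t0: "0 < th k" "th k < pi"
    proof -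
      show "0 < th k" unfolding th_def by simp
      have "th k \<le> 1" unfolding th_def by (simp add: field_simps)
      then show "th k < pi" using pi_ge_two by linarith
    qed
    have "Im (exp (\<i> * of_real (th k))) = sin (th k)" by (simp add: Im_exp)
    then have "exp (\<i> * of_real (th k)) \<noteq> 1" using sin_gt_zero[OF t0] by auto
    then have "a * exp (\<i> * of_real (th k)) \<noteq> a" using a0 by auto
    then show ?thesis using hyp[OF T_exp[OF a]] unfolding h_def by blast
  qed
  have "(\<lambda>k. Im (h (th k))) \<longlonglongrightarrow> Im (h 0)" by (rule tendsto_Im[OF lim])
  moreover have "(\<lambda>k. Im (h (th k))) = (\<lambda>k. 0)" using hprop by auto
  ultimately have "Im (h 0) = 0" using LIMSEQ_unique tendsto_const by metis
  moreover have "0 \<le> Re (h 0)"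
    by (rule LIMSEQ_le_const[OF tendsto_Re[OF lim]]) (use hprop in auto)
  ultimately show ?thesis using h0 by simp
qed

lemma double_root:
  fixes R R1 :: "complex poly"
  assumes a: "cmod a = 1"
  and hyp: "\<And>z. cmod z = 1 \<Longrightarrow> Im (poly R z / z^d) = 0 \<and> 0 \<le> Re (poly R z / z^d)"
  and R: "R = [:-a,1:] * R1"
  shows "poly R1 a = 0"
proof -
  have a0: "a \<noteq> 0" using a by auto
  have Ra: "poly R a = 0" using R by simp
  define G where "G = (\<lambda>w. (inverse a)^d * exp (- (\<i> * of_nat d * w)))"
  define F where "F = (\<lambda>w. poly R (a * exp (\<i> * w)) * G w)"
  define D where "D = poly (pderiv R) a * (a * \<i>) * (inverse a)^d"
  have h1: "((\<lambda>w. a * exp (\<i> * w)) has_field_derivative a * \<i>) (at 0)"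
    by (auto intro!: derivative_eq_intros)
  have h2: "((\<lambda>w. poly R (a * exp (\<i> * w))) has_field_derivative poly (pderiv R) a * (a * \<i>)) (at 0)"
    using DERIV_chain2[OF poly_DERIV[of R "a * exp (\<i> * 0)"] h1] by simp
  have h3: "(G has_field_derivative (inverse a)^d * (- (\<i> * of_nat d))) (at 0)"
    unfolding G_def by (auto intro!: derivative_eq_intros)
  have "(F has_field_derivative D) (at 0)"
    using DERIV_mult[OF h2 h3] Ra unfolding F_def D_def G_def by simp
  then have hv: "((\<lambda>x. F (of_real x)) has_vector_derivative D) (at 0)"
    using has_vector_derivative_real_field[of F D 0] by simp
  have FT: "F (of_real t) = poly R (a * exp (\<i> * of_real t)) / (a * exp (\<i> * of_real t))^d" for t
  proof -
    have "\<i> * of_nat d * of_real t = of_nat d * (\<i> * of_real t)" by (simp add: mult_ac)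
    then have e: "exp (- (\<i> * of_nat d * of_real t)) = inverse (exp (\<i> * of_real t) ^ d)"
      by (metis exp_minus exp_of_nat_mult)
    show ?thesis unfolding F_def G_def e
      by (simp add: power_mult_distrib divide_inverse inverse_mult_distrib mult_ac power_inverse)
  qed
  have Fpos: "0 \<le> Re (F (of_real t))" "Im (F (of_real t)) = 0" for t
    using hyp[OF T_exp[OF a, of t]] FT[of t] by auto
  have F0: "F 0 = 0" unfolding F_def using Ra by simp
  have "((\<lambda>x. Re (F (of_real x))) has_field_derivative Re D) (at 0)"
    by (rule has_field_derivative_Re[OF hv])
  then have ReD: "Re D = 0"
    by (rule DERIV_local_min[where d=1]) (use Fpos F0 in auto)
  have "((\<lambda>x. Im (F (of_real x))) has_field_derivative Im D) (at 0)"
    by (rule has_field_derivative_Im[OF hv])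
  moreover have "(\<lambda>x. Im (F (of_real x))) = (\<lambda>x. 0)" using Fpos by auto
  ultimately have ImD: "Im D = 0"
    using DERIV_unique DERIV_const by metis
  have "D = 0" using ReD ImD by (simp add: complex_eq_iff)
  then have "poly (pderiv R) a = 0" unfolding D_def using a0 by simp
  moreover have "poly (pderiv R) a = poly R1 a"
    unfolding R pderiv_mult by (simp add: pderiv_pCons)
  ultimately show ?thesis by simp
qed



lemma sym_crefl:
  fixes R :: "complex poly"
  assumes deg: "degree R \<le> 2*d" and hyp: "\<And>z. cmod z = 1 \<Longrightarrow> Im (poly R z / z^d) = 0"
  shows "crefl (2*d) R = R"
proof -
  have "poly (crefl (2*d) R - R) z = 0" if z: "cmod z = 1" for z
  proof -
    have z0: "z \<noteq> 0" using z by auto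
    have cw: "cnj w = w" if "Im w = 0" for w using that by (simp add: complex_eq_iff)
    have "cnj (poly R z / z^d) = poly R z / z^d" using cw hyp[OF z] by blast
    then have "cnj (poly R z) * z^d = poly R z / z^d"
      using T_cnj[OF z] z0 by (simp add: power_one_over)
    then have "z^d * z^d * cnj (poly R z) = poly R z" using z0 by (simp add: field_simps)
    moreover have "z^(2*d) = z^d * z^d" by (simp add: mult_2 power_add)
    ultimately show ?thesis using poly_crefl_T[OF deg z] by simp
  qed
  then show ?thesis using poly_T_zero by fastforce
qed

lemma FR:
  fixes R :: "complex poly"
  shows "degree R \<le> 2*d \<Longrightarrow> (\<forall>z. cmod z = 1 \<longrightarrow> Im (poly R z / z^d) = 0 \<and> 0 \<le> Re (poly R z / z^d))
    \<Longrightarrow> \<exists>Q. degree Q \<le> d \<and> (\<forall>z. cmod z = 1 \<longrightarrow> poly Q z * cnj (poly Q z) = poly R z / z^d)"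
proof (induction d arbitrary: R)
  case 0
  define r where "r = coeff R 0"
  have R: "poly R z = r" for z
    using 0(1) unfolding r_def by (simp add: poly_altdef)
  have "Im r = 0" "0 \<le> Re r" using 0(2)[rule_format, of 1] R by auto
  then have "complex_of_real (sqrt (Re r)) * cnj (complex_of_real (sqrt (Re r))) = r"
    by (simp add: complex_eq_iff)
  then show ?case using R by (intro exI[of _ "[:complex_of_real (sqrt (Re r)):]"]) auto
next
  case (Suc d R)
  define m where "m = Suc d"
  have hypR: "\<And>z. cmod z = 1 \<Longrightarrow> Im (poly R z / z^m) = 0 \<and> 0 \<le> Re (poly R z / z^m)"
    using Suc.prems(2) m_def by auto
  have degR: "degree R \<le> 2*m" using Suc.prems(1) m_def by simp
  have symR: "crefl (2*m) R = R" using sym_crefl[OF degR] hypR by blast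
  have csym: "coeff R (2*m) = cnj (coeff R 0)"
    using arg_cong[OF symR, of "\<lambda>p. coeff p (2*m)"] by (simp add: coeff_crefl)
  show ?case
  proof (cases "coeff R 0 = 0")
    case True
    obtain c R' where RR: "R = pCons c R'" by (cases R) auto
    have c0: "c = 0" using True RR by simp
    have "degree R' \<le> 2*d"
    proof (rule degree_le, intro allI impI)
      fix k assume k: "2*d < k"
      have "coeff R' k = coeff R (Suc k)" using RR by simp
      moreover have "coeff R (Suc k) = 0"
      proof (cases "Suc k = 2*m")
        case True then show ?thesis using csym \<open>coeff R 0 = 0\<close> by simp
      next
        case False then have "degree R < Suc k" using degR k m_def by simp
        then show ?thesis by (rule coeff_eq_0)
      qed
      ultimately show "coeff R' k = 0" by simp
    qed
    moreover have "\<forall>z. cmod z = 1 \<longrightarrow> poly R z / z^m = poly R' z / z^d"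
    proof (intro allI impI)
      fix z :: complex assume "cmod z = 1"
      then have "z \<noteq> 0" by auto
      then show "poly R z / z^m = poly R' z / z^d" using RR c0 m_def by simp
    qed
    ultimately obtain Q where "degree Q \<le> d" "\<forall>z. cmod z = 1 \<longrightarrow> poly Q z * cnj (poly Q z) = poly R' z / z^d"
      using Suc.IH[of R'] hypR by auto
    then show ?thesis using \<open>\<forall>z. cmod z = 1 \<longrightarrow> poly R z / z^m = poly R' z / z^d\<close> m_def
      by (intro exI[of _ Q]) auto
  next
    case False
    then have "coeff R (2*m) \<noteq> 0" using csym by simp
    then have "2*m \<le> degree R" by (rule le_degree)
    then have "degree R \<noteq> 0" using m_def by simp
    then have "\<not> constant (poly R)" using constant_degree[of R] by simp
    from fundamental_theorem_of_algebra[OF this] obtain a where Ra: "poly R a = 0" by blast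
    have a0: "a \<noteq> 0" using Ra False by (metis poly_0_coeff_0)
    define b where "b = 1 / cnj a"
    have b0: "b \<noteq> 0" using a0 b_def by simp
    have ba: "1 / cnj b = a" using b_def by simp
    have "poly R b = poly (crefl (2*m) R) b" using symR by simp
    also have "\<dots> = b^(2*m) * cnj (poly R (1 / cnj b))" by (rule poly_crefl[OF degR b0])
    also have "\<dots> = 0" using ba Ra by simp
    finally have Rb: "poly R b = 0" .
    obtain R1 where R1: "R = [:-a,1:] * R1" using Ra by (metis poly_eq_0_iff_dvd dvdE)
    have R1b: "poly R1 b = 0"
    proof (cases "a = b")
      case True
      have e: "a = 1 / cnj a" using True b_def by metis
      have "a * cnj a = (1 / cnj a) * cnj a" using e by metis
      also have "\<dots> = 1" using a0 by simp
      finally have "complex_of_real ((cmod a)^2) = 1" using complex_norm_square[of a] by simp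
      then have "(cmod a)^2 = 1" by (simp only: of_real_eq_1_iff)
      then have a1: "cmod a = 1" using norm_ge_zero[of a] by (auto simp: power2_eq_1_iff)
      have "poly R1 a = 0" by (rule double_root[where d=m, OF a1 hypR R1])
      then show ?thesis using True by simp
    next
      case False
      then show ?thesis using Rb R1 by simp
    qed
    obtain R2 where R2: "R1 = [:-b,1:] * R2" using R1b by (metis poly_eq_0_iff_dvd dvdE)
    have Rne: "R \<noteq> 0" using False by auto
    then have "R1 \<noteq> 0" "R2 \<noteq> 0" using R1 R2 by auto
    have "degree ([:-b,1:] * R2) = degree [:-b,1:] + degree R2"
      by (rule degree_mult_eq) (use \<open>R2 \<noteq> 0\<close> in auto)
    then have d1: "degree R1 = Suc (degree R2)" using R2 by simp
    have "degree ([:-a,1:] * R1) = degree [:-a,1:] + degree R1"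
      by (rule degree_mult_eq) (use \<open>R1 \<noteq> 0\<close> in auto)
    then have "degree R = 2 + degree R2" using R1 d1 by simp
    then have degR2: "degree R2 \<le> 2*d" using degR m_def by simp
    define R3 where "R3 = smult (- 1 / cnj a) R2"
    have degR3: "degree R3 \<le> 2*d" using degR2 R3_def by (simp add: degree_smult_le)
    have key: "poly R z / z^m = (z - a) * cnj (z - a) * (poly R3 z / z^d)" if z: "cmod z = 1" for z
    proof -
      have z0: "z \<noteq> 0" using z by auto
      have "cnj (z - a) = 1 / z - cnj a" using T_cnj[OF z] by simp
      then show ?thesis unfolding R1 R2 R3_def b_def m_def using z0 a0
        by (simp add: field_simps)
    qed
    have off: "Im (poly R3 z / z^d) = 0 \<and> 0 \<le> Re (poly R3 z / z^d)" if z: "cmod z = 1" and za: "z \<noteq> a" for z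
    proof -
      define r where "r = (cmod (z - a))^2"
      have r0: "r > 0" using za r_def by simp
      have "(z - a) * cnj (z - a) = of_real r" unfolding r_def by (rule complex_norm_square[symmetric])
      then have "poly R3 z / z^d = (poly R z / z^m) / of_real r" using key[OF z] r0 by simp
      moreover have "Im (poly R z / z^m / of_real r) = Im (poly R z / z^m) / r"
        "Re (poly R z / z^m / of_real r) = Re (poly R z / z^m) / r"
        by (rule Im_divide_of_real, rule Re_divide_of_real)
      ultimately show ?thesis using hypR[OF z] r0 by simp
    qed
    have hyp3: "\<forall>z. cmod z = 1 \<longrightarrow> Im (poly R3 z / z^d) = 0 \<and> 0 \<le> Re (poly R3 z / z^d)"
    proof (intro allI impI)
      fix z :: complex assume z: "cmod z = 1"
      show "Im (poly R3 z / z^d) = 0 \<and> 0 \<le> Re (poly R3 z / z^d)"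
      proof (cases "z = a")
        case True
        then show ?thesis using limit_pt[of a R3 d] off z by blast
      next
        case False then show ?thesis using off z by blast
      qed
    qed
    obtain Q' where Q': "degree Q' \<le> d" "\<forall>z. cmod z = 1 \<longrightarrow> poly Q' z * cnj (poly Q' z) = poly R3 z / z^d"
      using Suc.IH[OF degR3 hyp3] by blast
    define Q where "Q = [:-a,1:] * Q'"
    have "degree Q \<le> Suc d" unfolding Q_def
      using degree_mult_le[of "[:-a,1:]" Q'] Q'(1) by simp
    moreover have "poly Q z * cnj (poly Q z) = poly R z / z^(Suc d)" if z: "cmod z = 1" for z
    proof -
      have "poly Q z * cnj (poly Q z) = (z - a) * cnj (z - a) * (poly Q' z * cnj (poly Q' z))"
        unfolding Q_def by (simp add: algebra_simps)
      also have "\<dots> = (z - a) * cnj (z - a) * (poly R3 z / z^d)" using Q'(2) z by simp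
      also have "\<dots> = poly R z / z^m" using key[OF z] by simp
      finally show ?thesis unfolding m_def .
    qed
    ultimately show ?thesis by blast
  qed
qed



lemma mm2: "mmult 2 A B r s = A r 0 * B 0 s + A r 1 * B 1 s"
  by (simp add: mmult_def numeral_2_eq_2)

definition rot :: "complex \<Rightarrow> complex \<Rightarrow> cmat" where
  "rot a b = (\<lambda>r s. if r = 0 \<and> s = 0 then a else if r = 0 \<and> s = 1 then - cnj b
     else if r = 1 \<and> s = 0 then b else if r = 1 \<and> s = 1 then cnj a else 0)"

lemma unitary_rot:
  assumes "a * cnj a + b * cnj b = 1"
  shows "unitary_mat 2 (rot a b)"
proof -
  have "(\<Sum>k<2. cnj (rot a b k i) * rot a b k j) = (if i = j then 1 else 0)" if "i < 2" "j < 2" for i j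
  proof -
    have "i = 0 \<or> i = 1" "j = 0 \<or> j = 1" using that by auto
    then show ?thesis using assms
      by (auto simp: numeral_2_eq_2 rot_def algebra_simps)
  qed
  then show ?thesis unfolding unitary_mat_def by blast
qed

definition Sdiag :: "complex \<Rightarrow> cmat" where
  "Sdiag z = (\<lambda>r s. if r = s then (if r = 0 then z else 1) else 0)"

fun qspr :: "cmat list \<Rightarrow> complex \<Rightarrow> cmat" where
  "qspr [] z = idmat 2"
| "qspr [R] z = R"
| "qspr (R # Rs) z = mmult 2 R (mmult 2 (Sdiag z) (qspr Rs z))"

lemma coeff_top:
  fixes p p' :: "complex poly"
  assumes "degree p \<le> m"
  shows "coeff (p * crefl m p') (2*m) = coeff p m * cnj (coeff p' 0)"
proof -
  have "coeff (p * crefl m p') (2*m) = (\<Sum>i\<le>2*m. coeff p i * coeff (crefl m p') (2*m - i))"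
    by (rule coeff_mult)
  also have "\<dots> = (\<Sum>i\<le>2*m. if i = m then coeff p m * cnj (coeff p' 0) else 0)"
  proof (rule sum.cong)
    fix i assume "i \<in> {..2*m}"
    show "coeff p i * coeff (crefl m p') (2*m - i) = (if i = m then coeff p m * cnj (coeff p' 0) else 0)"
    proof (cases "i = m")
      case True then show ?thesis by (simp add: coeff_crefl)
    next
      case False
      show ?thesis
      proof (cases "i < m")
        case True then show ?thesis using False by (simp add: coeff_crefl)
      next
        case False2: False
        then have "degree p < i" using False assms by simp
        then show ?thesis using False by (simp add: coeff_eq_0)
      qed
    qed
  qed simp
  also have "\<dots> = coeff p m * cnj (coeff p' 0)" by simp
  finally show ?thesis .
qed

lemma orth:
  fixes p q :: "complex poly"
  assumes dp: "degree p \<le> m" and dq: "degree q \<le> m" and m: "m \<ge> 1"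
  and n: "\<forall>z. cmod z = 1 \<longrightarrow> poly p z * cnj (poly p z) + poly q z * cnj (poly q z) = 1"
  shows "coeff p m * cnj (coeff p 0) + coeff q m * cnj (coeff q 0) = 0"
proof -
  define E where "E = p * crefl m p + q * crefl m q - monom 1 m"
  have "poly E z = 0" if z: "cmod z = 1" for z
  proof -
    have "poly E z = z^m * (poly p z * cnj (poly p z) + poly q z * cnj (poly q z)) - z^m"
      unfolding E_def using poly_crefl_T[OF dp z] poly_crefl_T[OF dq z]
      by (simp add: poly_monom algebra_simps)
    then show ?thesis using n z by simp
  qed
  then have "E = 0" by (rule poly_T_zero)
  then have "coeff E (2*m) = 0" by simp
  moreover have "coeff (monom (1::complex) m) (2*m) = 0" using m by (simp add: coeff_monom)
  ultimately show ?thesis unfolding E_def using coeff_top[OF dp] coeff_top[OF dq] by simp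
qed

lemma normalize2:
  fixes u1 u2 :: complex
  assumes "u1 \<noteq> 0 \<or> u2 \<noteq> 0"
  shows "\<exists>k::real. k \<noteq> 0 \<and> (u1 / of_real k) * cnj (u1 / of_real k) + (u2 / of_real k) * cnj (u2 / of_real k) = 1"
proof -
  define k where "k = sqrt ((cmod u1)^2 + (cmod u2)^2)"
  have pos: "(cmod u1)^2 + (cmod u2)^2 > 0" using assms by (auto simp: add_pos_nonneg add_nonneg_pos)
  have k0: "k \<noteq> 0" unfolding k_def using assms by simp
  have kk: "k^2 = (cmod u1)^2 + (cmod u2)^2" unfolding k_def using pos by simp
  have "(u1 / of_real k) * cnj (u1 / of_real k) + (u2 / of_real k) * cnj (u2 / of_real k)
      = (u1 * cnj u1 + u2 * cnj u2) / of_real (k^2)"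
    using k0 by (simp add: field_simps power2_eq_square)
  also have "\<dots> = 1"
  proof -
    have e: "u1 * cnj u1 + u2 * cnj u2 = of_real (k^2)"
      by (simp only: kk of_real_add complex_norm_square)
    show ?thesis unfolding e using k0 by simp
  qed
  finally show ?thesis using k0 by blast
qed

lemma choose_ab:
  fixes p0 q0 pm qm :: complex
  assumes o: "pm * cnj p0 + qm * cnj q0 = 0"
  shows "\<exists>a b. a * cnj a + b * cnj b = 1 \<and> cnj a * p0 + cnj b * q0 = 0 \<and> - b * pm + a * qm = 0"
proof (cases "pm \<noteq> 0 \<or> qm \<noteq> 0")
  case True
  obtain k where k: "k \<noteq> 0" "(pm / of_real k) * cnj (pm / of_real k) + (qm / of_real k) * cnj (qm / of_real k) = 1"
    using normalize2[OF True] by blast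
  have "cnj (pm / of_real k) * p0 + cnj (qm / of_real k) * q0 = cnj (pm * cnj p0 + qm * cnj q0) / of_real k"
    by (simp add: add_divide_distrib mult.commute)
  then have "cnj (pm / of_real k) * p0 + cnj (qm / of_real k) * q0 = 0" using o by simp
  moreover have "- (qm / of_real k) * pm + (pm / of_real k) * qm = 0" by (simp add: field_simps)
  ultimately show ?thesis using k by blast
next
  case False
  then have z: "pm = 0" "qm = 0" by auto
  show ?thesis
  proof (cases "p0 \<noteq> 0 \<or> q0 \<noteq> 0")
    case True
    then have "- cnj q0 \<noteq> 0 \<or> cnj p0 \<noteq> 0" by auto
    then obtain k where k: "k \<noteq> 0" "(- cnj q0 / of_real k) * cnj (- cnj q0 / of_real k) + (cnj p0 / of_real k) * cnj (cnj p0 / of_real k) = 1"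
      using normalize2 by blast
    have "cnj (- cnj q0 / of_real k) * p0 + cnj (cnj p0 / of_real k) * q0 = 0"
      by (simp add: field_simps)
    then show ?thesis using k z by (intro exI[of _ "- cnj q0 / of_real k"] exI[of _ "cnj p0 / of_real k"]) auto
  next
    case False
    then show ?thesis using z by (intro exI[of _ 1] exI[of _ 0]) auto
  qed
qed

lemma norm_id:
  fixes a b P Q :: complex
  shows "(cnj a * P + cnj b * Q) * cnj (cnj a * P + cnj b * Q) + (- b * P + a * Q) * cnj (- b * P + a * Q)
       = (a * cnj a + b * cnj b) * (P * cnj P + Q * cnj Q)"
  by (simp add: algebra_simps)

lemma QSP:
  fixes p q :: "complex poly"
  shows "degree p \<le> d \<Longrightarrow> degree q \<le> d \<Longrightarrow>
    (\<forall>z. cmod z = 1 \<longrightarrow> poly p z * cnj (poly p z) + poly q z * cnj (poly q z) = 1) \<Longrightarrow>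
    \<exists>Rs. length Rs = Suc d \<and> (\<forall>R\<in>set Rs. unitary_mat 2 R) \<and>
      (\<forall>z. qspr Rs z 0 0 = poly p z \<and> qspr Rs z 1 0 = poly q z)"
proof (induction d arbitrary: p q)
  case 0
  define p0 where "p0 = coeff p 0"
  define q0 where "q0 = coeff q 0"
  have P: "poly p z = p0" "poly q z = q0" for z
    using 0 unfolding p0_def q0_def by (simp_all add: poly_altdef)
  have "p0 * cnj p0 + q0 * cnj q0 = 1" using 0(3)[rule_format, of 1] P by simp
  then have u: "unitary_mat 2 (rot p0 q0)" by (rule unitary_rot)
  show ?case using P u
    by (intro exI[of _ "[rot p0 q0]"]) (auto simp: rot_def)
next
  case (Suc d p q)
  define m where "m = Suc d"
  have dp: "degree p \<le> m" and dq: "degree q \<le> m" using Suc.prems m_def by auto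
  have o: "coeff p m * cnj (coeff p 0) + coeff q m * cnj (coeff q 0) = 0"
    using orth[OF dp dq _ Suc.prems(3)] m_def by simp
  obtain a b where ab: "a * cnj a + b * cnj b = 1" "cnj a * coeff p 0 + cnj b * coeff q 0 = 0"
    "- b * coeff p m + a * coeff q m = 0"
    using choose_ab[OF o] by blast
  define f1 where "f1 = smult (cnj a) p + smult (cnj b) q"
  define f2 where "f2 = smult (- b) p + smult a q"
  have f10: "coeff f1 0 = 0" using ab(2) unfolding f1_def by simp
  obtain c p' where f1p: "f1 = pCons c p'" by (cases f1) auto
  have c0: "c = 0" using f10 f1p by simp
  have df1: "degree f1 \<le> m" unfolding f1_def using dp dq
    by (meson degree_add_le degree_smult_le order_trans)
  have dp': "degree p' \<le> d"
  proof (cases "p' = 0")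
    case False
    then show ?thesis using df1 f1p m_def by (simp add: degree_pCons_eq)
  qed simp
  have df2: "degree f2 \<le> m" unfolding f2_def using dp dq
    by (meson degree_add_le degree_smult_le order_trans)
  have dq': "degree f2 \<le> d"
  proof (rule degree_le, intro allI impI)
    fix k assume k: "d < k"
    show "coeff f2 k = 0"
    proof (cases "k = m")
      case True then show ?thesis using ab(3) unfolding f2_def by simp
    next
      case False then have "degree f2 < k" using df2 k m_def by simp
      then show ?thesis by (rule coeff_eq_0)
    qed
  qed
  have pf1: "poly f1 z = z * poly p' z" for z using f1p c0 by simp
  have n': "\<forall>z. cmod z = 1 \<longrightarrow> poly p' z * cnj (poly p' z) + poly f2 z * cnj (poly f2 z) = 1"
  proof (intro allI impI)
    fix z :: complex assume z: "cmod z = 1"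
    have zz: "z * cnj z = 1" using z T_cnj[OF z] by (auto simp: field_simps)
    have "poly f1 z * cnj (poly f1 z) = (z * cnj z) * (poly p' z * cnj (poly p' z))"
      unfolding pf1 by (simp add: mult_ac)
    then have e1: "poly f1 z * cnj (poly f1 z) = poly p' z * cnj (poly p' z)" using zz by simp
    have "poly f1 z * cnj (poly f1 z) + poly f2 z * cnj (poly f2 z)
        = (a * cnj a + b * cnj b) * (poly p z * cnj (poly p z) + poly q z * cnj (poly q z))"
      unfolding f1_def f2_def using norm_id[of a "poly p z" b "poly q z"] by simp
    also have "\<dots> = 1" using ab(1) Suc.prems(3) z by simp
    finally show "poly p' z * cnj (poly p' z) + poly f2 z * cnj (poly f2 z) = 1" using e1 by simp
  qed
  obtain Rs where Rs: "length Rs = Suc d" "\<forall>R\<in>set Rs. unitary_mat 2 R"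
    "\<forall>z. qspr Rs z 0 0 = poly p' z \<and> qspr Rs z 1 0 = poly f2 z"
    using Suc.IH[OF dp' dq' n'] by blast
  obtain R0 Rs' where RR: "Rs = R0 # Rs'" using Rs(1) by (cases Rs) auto
  have qs: "qspr (rot a b # Rs) z = mmult 2 (rot a b) (mmult 2 (Sdiag z) (qspr Rs z))" for z
    unfolding RR by simp
  have col: "qspr (rot a b # Rs) z 0 0 = poly p z \<and> qspr (rot a b # Rs) z 1 0 = poly q z" for z
  proof -
    have "qspr (rot a b # Rs) z 0 0 = a * poly f1 z - cnj b * poly f2 z"
      unfolding qs mm2 using Rs(3) pf1 by (simp add: rot_def Sdiag_def)
    also have "\<dots> = (a * cnj a + b * cnj b) * poly p z" unfolding f1_def f2_def by (simp add: algebra_simps)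
    finally have 1: "qspr (rot a b # Rs) z 0 0 = poly p z" using ab(1) by simp
    have "qspr (rot a b # Rs) z 1 0 = b * poly f1 z + cnj a * poly f2 z"
      unfolding qs mm2 using Rs(3) pf1 by (simp add: rot_def Sdiag_def)
    also have "\<dots> = (a * cnj a + b * cnj b) * poly q z" unfolding f1_def f2_def by (simp add: algebra_simps)
    finally have 2: "qspr (rot a b # Rs) z 1 0 = poly q z" using ab(1) by simp
    show ?thesis using 1 2 by blast
  qed
  show ?case
    using Rs(1,2) col unitary_rot[OF ab(1)] by (intro exI[of _ "rot a b # Rs"]) auto
qed



lemma qbit_lt2: "qbit x i < 2" by (simp add: qbit_def)

lemma qbit_bit: "qbit x i = (if bit x i then 1 else 0)"
  by (simp add: qbit_def bit_iff_odd odd_iff_mod_2_eq_one)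

lemma mod_eq_bits: "(x::nat) mod 2^n = y mod 2^n \<longleftrightarrow> (\<forall>i<n. qbit x i = qbit y i)"
proof -
  have "x mod 2^n = y mod 2^n \<longleftrightarrow> take_bit n x = take_bit n y" by (simp add: take_bit_eq_mod)
  also have "\<dots> \<longleftrightarrow> (\<forall>m. bit (take_bit n x) m = bit (take_bit n y) m)" 
  proof
    assume H: "\<forall>m. bit (take_bit n x) m = bit (take_bit n y) m"
    show "take_bit n x = take_bit n y" by (rule bit_eqI) (use H in simp)
  qed simp
  also have "\<dots> \<longleftrightarrow> (\<forall>i<n. bit x i = bit y i)" 
  proof
    assume H: "\<forall>m. bit (take_bit n x) m = bit (take_bit n y) m"
    show "\<forall>i<n. bit x i = bit y i"
    proof (intro allI impI)
      fix i assume "i < n"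
      then show "bit x i = bit y i" using H[rule_format, of i] by (simp add: bit_take_bit_iff)
    qed
  next
    assume H: "\<forall>i<n. bit x i = bit y i"
    show "\<forall>m. bit (take_bit n x) m = bit (take_bit n y) m"
    proof
      fix m show "bit (take_bit n x) m = bit (take_bit n y) m"
        using H by (cases "m < n") (simp_all add: bit_take_bit_iff)
    qed
  qed
  also have "\<dots> \<longleftrightarrow> (\<forall>i<n. qbit x i = qbit y i)"
  proof -
    have pw: "(qbit x i = qbit y i) = (bit x i = bit y i)" for i by (auto simp: qbit_bit)
    show ?thesis by (simp only: pw)
  qed
  finally show ?thesis .
qed

lemma div_lt2: "(x::nat) < 2^(n+1) \<Longrightarrow> x div 2^n < 2"
  by (simp add: less_mult_imp_div_less mult.commute)

lemma qbit_top: "x < 2^(n+1) \<Longrightarrow> qbit x n = x div 2^n"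
  using div_lt2[of x n] by (simp add: qbit_def)

lemma qbit_high: "x < 2^(n+1) \<Longrightarrow> n < i \<Longrightarrow> qbit x i = 0"
proof -
  assume "x < 2^(n+1)" "n < i"
  moreover have "2^(n+1) \<le> (2::nat)^i" using \<open>n < i\<close> by (intro power_increasing) auto
  ultimately have "x < 2^i" by linarith
  then show ?thesis by (simp add: qbit_def)
qed

lemma rest_iff:
  assumes "x < 2^(n+1)" "y < 2^(n+1)"
  shows "(\<forall>i. i \<noteq> n \<longrightarrow> qbit x i = qbit y i) \<longleftrightarrow> x mod 2^n = y mod 2^n"
proof -
  have "(\<forall>i. i \<noteq> n \<longrightarrow> qbit x i = qbit y i) \<longleftrightarrow> (\<forall>i<n. qbit x i = qbit y i)"
  proof
    assume "\<forall>i<n. qbit x i = qbit y i"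
    then show "\<forall>i. i \<noteq> n \<longrightarrow> qbit x i = qbit y i"
      using qbit_high[OF assms(1)] qbit_high[OF assms(2)] by (metis linorder_neqE_nat)
  qed auto
  then show ?thesis using mod_eq_bits by simp
qed

definition blockdiag :: "nat \<Rightarrow> cmat \<Rightarrow> (nat \<Rightarrow> cmat) \<Rightarrow> bool" where
  "blockdiag n M W \<longleftrightarrow> (\<forall>x y. M x y = (if x < 2^(n+1) \<and> y < 2^(n+1) \<and> x mod 2^n = y mod 2^n
      then W (x mod 2^n) (x div 2^n) (y div 2^n) else 0))"

lemma bd_cong:
  assumes "blockdiag n M W" "\<And>j a b. j < 2^n \<Longrightarrow> a < 2 \<Longrightarrow> b < 2 \<Longrightarrow> W j a b = W' j a b"
  shows "blockdiag n M W'"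
  unfolding blockdiag_def
proof (intro allI)
  fix x y
  show "M x y = (if x < 2^(n+1) \<and> y < 2^(n+1) \<and> x mod 2^n = y mod 2^n
      then W' (x mod 2^n) (x div 2^n) (y div 2^n) else 0)"
    using assms(1) assms(2)[of "x mod 2^n" "x div 2^n" "y div 2^n"] div_lt2[of x n] div_lt2[of y n]
    unfolding blockdiag_def by auto
qed

lemma bd_id: "blockdiag n (idmat (2^(n+1))) (\<lambda>j. idmat 2)"
  unfolding blockdiag_def
proof (intro allI)
  fix x y :: nat
  have "x = y \<longleftrightarrow> x mod 2^n = y mod 2^n \<and> x div 2^n = y div 2^n"
    by (metis div_mult_mod_eq)
  then show "idmat (2^(n+1)) x y = (if x < 2^(n+1) \<and> y < 2^(n+1) \<and> x mod 2^n = y mod 2^n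
      then idmat 2 (x div 2^n) (y div 2^n) else 0)"
    using div_lt2[of x n] unfolding idmat_def by auto
qed

lemma bd_G1: "blockdiag n (gate_mat (n+1) (G1 n U)) (\<lambda>j. U)"
  unfolding blockdiag_def
proof (intro allI)
  fix x y :: nat
  show "gate_mat (n+1) (G1 n U) x y = (if x < 2^(n+1) \<and> y < 2^(n+1) \<and> x mod 2^n = y mod 2^n
      then U (x div 2^n) (y div 2^n) else 0)"
  proof (cases "x < 2^(n+1) \<and> y < 2^(n+1)")
    case True
    then show ?thesis using rest_iff[of x n y] qbit_top[of x n] qbit_top[of y n]
      by auto
  qed auto
qed

definition phU :: "complex \<Rightarrow> cmat" where
  "phU ph = (\<lambda>r s. if r = s then (if r = 1 then ph else 1) else 0)"

lemma bd_G2: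
  assumes i: "i < n"
  shows "blockdiag n (gate_mat (n+1) (G2 n i (phU ph))) (\<lambda>j. Sdiag (if qbit j i = 1 then ph else 1))"
  unfolding blockdiag_def
proof (intro allI)
  fix x y :: nat
  show "gate_mat (n+1) (G2 n i (phU ph)) x y = (if x < 2^(n+1) \<and> y < 2^(n+1) \<and> x mod 2^n = y mod 2^n
      then Sdiag (if qbit (x mod 2^n) i = 1 then ph else 1) (x div 2^n) (y div 2^n) else 0)"
  proof (cases "x < 2^(n+1) \<and> y < 2^(n+1)")
    case False then show ?thesis by auto
  next
    case True
    then have xr: "x < 2^(n+1)" and yr: "y < 2^(n+1)" by auto
    define xa where "xa = x div 2^n"
    define ya where "ya = y div 2^n"
    have xa2: "xa < 2" "ya < 2" using div_lt2 xr yr xa_def ya_def by auto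
    have qn: "qbit x n = xa" "qbit y n = ya" using qbit_top xr yr xa_def ya_def by auto
    have qi: "qbit (x mod 2^n) i = qbit x i"
      using mod_eq_bits[of "x mod 2^n" n x] i by simp
    have bx: "qbit x i < 2" "qbit y i < 2" by (rule qbit_lt2)+
    let ?cond = "\<forall>l. l \<noteq> n \<and> l \<noteq> i \<longrightarrow> qbit x l = qbit y l"
    have G: "gate_mat (n+1) (G2 n i (phU ph)) x y =
      (if ?cond then phU ph (2 * xa + qbit x i) (2 * ya + qbit y i) else 0)"
      unfolding gate_mat.simps qn[symmetric] using xr yr by (simp only: simp_thms)
    show ?thesis
    proof (cases "x mod 2^n = y mod 2^n")
      case True
      then have c: ?cond using rest_iff[OF xr yr] by auto
      have e: "qbit x i = qbit y i" using True mod_eq_bits i by blast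
      show ?thesis unfolding G qi using c e True xr yr xa2 bx
        unfolding xa_def[symmetric] ya_def[symmetric]
        by (auto simp: phU_def Sdiag_def)
    next
      case False
      have ph0: "phU ph (2 * xa + qbit x i) (2 * ya + qbit y i) = 0" if c: ?cond
      proof -
        have "qbit x i \<noteq> qbit y i"
        proof
          assume "qbit x i = qbit y i"
          then have "\<forall>l<n. qbit x l = qbit y l" using c i by (metis less_not_refl)
          then show False using False mod_eq_bits by blast
        qed
        then have "2 * xa + qbit x i \<noteq> 2 * ya + qbit y i" using bx by presburger
        then show ?thesis by (simp add: phU_def)
      qed
      have "gate_mat (n+1) (G2 n i (phU ph)) x y = 0"
      proof (cases ?cond)
        case True show ?thesis unfolding G if_P[OF True] by (rule ph0[OF True])
      next
        case False then show ?thesis unfolding G by (rule if_not_P)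
      qed
      then show ?thesis using False by simp
    qed
  qed
qed



lemma sum_split2: "(\<Sum>k<2*(N::nat). g k) = (\<Sum>k<N. g k) + (\<Sum>k<N. g (k + N))"
proof -
  have "{..<2*N} = {..<N} \<union> {N..<2*N}" by auto
  then have "(\<Sum>k<2*N. g k) = sum g ({..<N} \<union> {N..<2*N})" by (simp only:)
  also have "\<dots> = (\<Sum>k<N. g k) + (\<Sum>k\<in>{N..<2*N}. g k)"
    by (rule sum.union_disjoint) auto
  finally have "(\<Sum>k<2*N. g k) = (\<Sum>k<N. g k) + (\<Sum>k\<in>{N..<2*N}. g k)" .
  moreover have "(\<Sum>k\<in>{N..<2*N}. g k) = (\<Sum>k<N. g (k + N))"
  proof -
    have "{N..<2*N} = (\<lambda>k. k + N) ` {..<N}"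
    proof
      show "{N..<2*N} \<subseteq> (\<lambda>k. k + N) ` {..<N}"
      proof
        fix k assume "k \<in> {N..<2*N}"
        then have "k = (k - N) + N" "k - N < N" by auto
        then show "k \<in> (\<lambda>k. k + N) ` {..<N}" by blast
      qed
    qed auto
    then show ?thesis by (simp add: sum.reindex)
  qed
  ultimately show ?thesis by simp
qed

lemma bd_mult:
  assumes A: "blockdiag n A WA" and B: "blockdiag n B WB"
  shows "blockdiag n (mmult (2^(n+1)) A B) (\<lambda>j. mmult 2 (WA j) (WB j))"
  unfolding blockdiag_def
proof (intro allI)
  fix x y :: nat
  define N :: nat where "N = 2^n"
  have N2: "2^(n+1) = 2 * N" unfolding N_def by simp
  have Ak: "A x k = (if x < 2*N \<and> k < 2*N \<and> x mod N = k mod N then WA (x mod N) (x div N) (k div N) else 0)" for k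
    using A unfolding blockdiag_def N2 N_def by simp
  have Bk: "B k y = (if k < 2*N \<and> y < 2*N \<and> k mod N = y mod N then WB (k mod N) (k div N) (y div N) else 0)" for k
    using B unfolding blockdiag_def N2 N_def by simp
  have "mmult (2^(n+1)) A B x y = (\<Sum>k<2*N. A x k * B k y)" unfolding mmult_def N2 ..
  also have "\<dots> = (if x < 2*N \<and> y < 2*N \<and> x mod N = y mod N
      then mmult 2 (WA (x mod N)) (WB (x mod N)) (x div N) (y div N) else 0)"
  proof (cases "x < 2*N \<and> y < 2*N \<and> x mod N = y mod N")
    case False
    then have "\<forall>k\<in>{..<2*N}. A x k * B k y = 0" using Ak Bk by auto
    then have "(\<Sum>k<2*N. A x k * B k y) = 0" by (rule sum.neutral)
    then show ?thesis by (subst if_not_P[OF False])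
  next
    case True
    define j where "j = x mod N"
    have jN: "j < N" unfolding j_def N_def by simp
    have t1: "A x k * B k y = (if k = j then WA j (x div N) 0 * WB j 0 (y div N) else 0)" if "k < N" for k
      using that True Ak[of k] Bk[of k] unfolding j_def by auto
    have t2: "A x (k + N) * B (k + N) y = (if k = j then WA j (x div N) 1 * WB j 1 (y div N) else 0)" if "k < N" for k
    proof -
      have "(k + N) mod N = k" "(k + N) div N = 1" using that by auto
      then show ?thesis using that True Ak[of "k+N"] Bk[of "k+N"] unfolding j_def by auto
    qed
    have "(\<Sum>k<2*N. A x k * B k y) = (\<Sum>k<N. A x k * B k y) + (\<Sum>k<N. A x (k + N) * B (k + N) y)"
      by (rule sum_split2)
    also have "\<dots> = WA j (x div N) 0 * WB j 0 (y div N) + WA j (x div N) 1 * WB j 1 (y div N)"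
      using t1 t2 jN by simp
    finally show ?thesis using True unfolding mm2 j_def by simp
  qed
  finally show "mmult (2^(n+1)) A B x y = (if x < 2^(n+1) \<and> y < 2^(n+1) \<and> x mod 2^n = y mod 2^n
      then mmult 2 (WA (x mod 2^n)) (WB (x mod 2^n)) (x div 2^n) (y div 2^n) else 0)"
    unfolding N2 N_def .
qed



definition phases :: "nat \<Rightarrow> gate list" where
  "phases n = map (\<lambda>i. G2 n i (phU (omega (2^n) ^ (2^i)))) [0..<n]"

fun circ :: "nat \<Rightarrow> cmat list \<Rightarrow> gate list" where
  "circ n [] = []"
| "circ n [R] = [G1 n R]"
| "circ n (R # R' # Rs) = circ n (R' # Rs) @ phases n @ [G1 n R]"

lemma Sdiag_mult: "mmult 2 (Sdiag x) (mmult 2 (Sdiag y) M) = mmult 2 (Sdiag (x*y)) M"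
  by (rule ext)+ (simp add: mm2 Sdiag_def)

lemma lt2: "(a::nat) < 2 \<Longrightarrow> a = 0 \<or> a = 1" by auto

lemma bd_phases_gen:
  "\<forall>i\<in>set L. i < n \<Longrightarrow> blockdiag n M W \<Longrightarrow>
   blockdiag n (foldl (\<lambda>M g. mmult (2^(n+1)) (gate_mat (n+1) g) M) M (map (\<lambda>i. G2 n i (phU (ph i))) L))
     (\<lambda>j. mmult 2 (Sdiag (\<Prod>i\<leftarrow>L. if qbit j i = 1 then ph i else 1)) (W j))"
proof (induction L arbitrary: M W)
  case Nil
  have "blockdiag n M (\<lambda>j. mmult 2 (Sdiag 1) (W j))"
    by (rule bd_cong[OF Nil(2)]) (auto dest!: lt2 simp: mm2 Sdiag_def)
  then show ?case by simp
next
  case (Cons i L)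
  have i: "i < n" using Cons.prems by simp
  have b1: "blockdiag n (mmult (2^(n+1)) (gate_mat (n+1) (G2 n i (phU (ph i)))) M)
     (\<lambda>j. mmult 2 (Sdiag (if qbit j i = 1 then ph i else 1)) (W j))"
    by (rule bd_mult[OF bd_G2[OF i] Cons.prems(2)])
  have "blockdiag n (foldl (\<lambda>M g. mmult (2^(n+1)) (gate_mat (n+1) g) M)
      (mmult (2^(n+1)) (gate_mat (n+1) (G2 n i (phU (ph i)))) M) (map (\<lambda>i. G2 n i (phU (ph i))) L))
     (\<lambda>j. mmult 2 (Sdiag (\<Prod>i\<leftarrow>L. if qbit j i = 1 then ph i else 1))
        (mmult 2 (Sdiag (if qbit j i = 1 then ph i else 1)) (W j)))"
    using Cons.IH[OF _ b1] Cons.prems(1) by simp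
  then show ?case by (simp add: Sdiag_mult mult.commute)
qed

lemma prod_bits:
  fixes w :: complex
  shows "(\<Prod>i\<leftarrow>[0..<n]. if qbit j i = 1 then w^(2^i) else 1) = w^(j mod 2^n)"
proof (induction n)
  case 0 then show ?case by simp
next
  case (Suc n)
  have m: "j mod 2^(Suc n) = 2^n * qbit j n + j mod 2^n"
    unfolding qbit_def power_Suc2 by (rule mod_mult2_eq)
  have "qbit j n = 0 \<or> qbit j n = 1" using qbit_lt2[of j n] by auto
  then show ?case using Suc m by (auto simp: power_add power_mult)
qed

lemma circuit_mat_append:
  "circuit_mat m (xs @ ys) = foldl (\<lambda>M g. mmult (2^m) (gate_mat m g) M) (circuit_mat m xs) ys"
  by (simp add: circuit_mat_def)

lemma bd_circ: "Rs \<noteq> [] \<Longrightarrow> blockdiag n (circuit_mat (n+1) (circ n Rs)) (\<lambda>j. qspr Rs (omega (2^n) ^ j))"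
proof (induction n Rs rule: circ.induct)
  case (1 n) then show ?case by simp
next
  case (2 n R)
  have "circuit_mat (n+1) [G1 n R] = mmult (2^(n+1)) (gate_mat (n+1) (G1 n R)) (idmat (2^(n+1)))"
    by (simp add: circuit_mat_def)
  moreover have "blockdiag n (mmult (2^(n+1)) (gate_mat (n+1) (G1 n R)) (idmat (2^(n+1)))) (\<lambda>j. mmult 2 R (idmat 2))"
    by (rule bd_mult[OF bd_G1 bd_id])
  ultimately have "blockdiag n (circuit_mat (n+1) [G1 n R]) (\<lambda>j. mmult 2 R (idmat 2))" by simp
  then have "blockdiag n (circuit_mat (n+1) [G1 n R]) (\<lambda>j. R)"
    by (rule bd_cong) (auto dest!: lt2 simp: mm2 idmat_def)
  then show ?case by simp
next
  case (3 n R R' Rs)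
  let ?f = "\<lambda>M g. mmult (2^(n+1)) (gate_mat (n+1) g) M"
  let ?w = "omega (2^n)"
  define X where "X = circuit_mat (n+1) (circ n (R' # Rs))"
  have IH: "blockdiag n X (\<lambda>j. qspr (R' # Rs) (?w ^ j))" using 3 X_def by simp
  have "blockdiag n (foldl ?f X (phases n))
     (\<lambda>j. mmult 2 (Sdiag (\<Prod>i\<leftarrow>[0..<n]. if qbit j i = 1 then ?w^(2^i) else 1)) (qspr (R' # Rs) (?w ^ j)))"
    unfolding phases_def by (rule bd_phases_gen[OF _ IH]) simp
  then have Y: "blockdiag n (foldl ?f X (phases n)) (\<lambda>j. mmult 2 (Sdiag (?w ^ j)) (qspr (R' # Rs) (?w ^ j)))"
    by (rule bd_cong) (simp only: prod_bits, simp)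
  have "circuit_mat (n+1) (circ n (R # R' # Rs)) = mmult (2^(n+1)) (gate_mat (n+1) (G1 n R)) (foldl ?f X (phases n))"
    unfolding X_def by (simp add: circuit_mat_append)
  moreover have "blockdiag n (mmult (2^(n+1)) (gate_mat (n+1) (G1 n R)) (foldl ?f X (phases n)))
     (\<lambda>j. mmult 2 R (mmult 2 (Sdiag (?w ^ j)) (qspr (R' # Rs) (?w ^ j))))"
    by (rule bd_mult[OF bd_G1 Y])
  ultimately show ?case by simp
qed

lemma omega_norm: "cmod (omega N ^ k) = 1"
proof -
  have "omega N = exp (\<i> * complex_of_real (2 * pi / real N))"
    unfolding omega_def by (simp add: field_simps)
  then show ?thesis by (simp add: norm_power)
qed

lemma unitary_phU:
  assumes "ph * cnj ph = 1"
  shows "unitary_mat 4 (phU ph)"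
  unfolding unitary_mat_def
proof (intro allI impI)
  fix i j :: nat assume "i < 4" "j < 4"
  have "(\<Sum>k<4. cnj (phU ph k i) * phU ph k j) = (\<Sum>k<4. if k = i then (if i = j then cnj (phU ph i i) * phU ph i i else 0) else 0)"
    by (rule sum.cong) (auto simp: phU_def)
  also have "\<dots> = (if i = j then cnj (phU ph i i) * phU ph i i else 0)" using \<open>i < 4\<close> by simp
  also have "\<dots> = (if i = j then 1 else 0)" using assms by (auto simp: phU_def mult.commute)
  finally show "(\<Sum>k<4. cnj (phU ph k i) * phU ph k j) = (if i = j then 1 else 0)" .
qed

lemma valid_circ: "\<forall>R\<in>set Rs. unitary_mat 2 R \<Longrightarrow> \<forall>g\<in>set (circ n Rs). valid_gate (n+1) g"
proof (induction n Rs rule: circ.induct)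
  case (3 n R R' Rs)
  have ph: "omega (2^n) ^ (2^i) * cnj (omega (2^n) ^ (2^i)) = 1" for i
    using complex_norm_square[of "omega (2^n) ^ (2^i)"] omega_norm[of "2^n" "2^i"] by simp
  have "\<forall>g\<in>set (phases n). valid_gate (n+1) g"
    unfolding phases_def using unitary_phU[OF ph] by auto
  then show ?case using 3 by auto
qed auto

lemma length_circ: "length (circ n Rs) = length Rs + (length Rs - 1) * n"
  by (induction n Rs rule: circ.induct) (auto simp: phases_def)

lemma mpow_U: "mpow D (U_omega D) m i j = (if i = j \<and> i < D then (omega D ^ i)^m else 0)"
proof (induction m arbitrary: i j)
  case 0 then show ?case by (simp add: idmat_def)
next
  case (Suc m)
  have "mpow D (U_omega D) (Suc m) i j = (\<Sum>k<D. U_omega D i k * mpow D (U_omega D) m k j)"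
    by (simp add: mmult_def)
  also have "\<dots> = (\<Sum>k<D. if k = i then (if i = j \<and> i < D then omega D ^ i * (omega D ^ i)^m else 0) else 0)"
  proof (rule sum.cong)
    fix k assume "k \<in> {..<D}"
    have Uik: "U_omega D i k = (if i = k \<and> i < D then omega D ^ k else 0)" by (simp add: U_omega_def)
    show "U_omega D i k * mpow D (U_omega D) m k j = (if k = i then (if i = j \<and> i < D then omega D ^ i * (omega D ^ i)^m else 0) else 0)"
      unfolding Uik Suc.IH by auto
  qed simp
  also have "\<dots> = (if i = j \<and> i < D then (omega D ^ i)^(Suc m) else 0)" by simp
  finally show ?case .
qed

lemma poly_mat_U: "poly_mat D P (U_omega D) i j = (if i = j \<and> i < D then poly P (omega D ^ i) else 0)"
proof (cases "i = j \<and> i < D")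
  case True then show ?thesis by (simp add: poly_mat_def mpow_U poly_altdef)
next
  case False
  then have "mpow D (U_omega D) k i j = 0" for k unfolding mpow_U by (rule if_not_P)
  then have "poly_mat D P (U_omega D) i j = 0" by (simp add: poly_mat_def)
  then show ?thesis using False by (subst if_not_P)
qed



theorem theorem10:
  shows "\<exists>C::real. \<forall>(n::nat) (d::nat) (P::complex poly) (c::real).
     n \<ge> 1 \<and> degree P = d \<and> c > 0 \<and>
     (\<forall>x::complex. cmod x = 1 \<longrightarrow> (cmod (poly P x))\<^sup>2 \<le> c) \<longrightarrow>
     (\<exists>gs::gate list.
        (\<forall>g\<in>set gs. valid_gate (n + 1) g) \<and>
        real (length gs) \<le> C * real (d + 1) * real n \<and>
        top_left_block n (circuit_mat (n + 1) gs)
          (\<lambda>j k. poly_mat (2 ^ n) P (U_omega (2 ^ n)) j k / complex_of_real (sqrt c)))"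
proof (intro exI[of _ 2] allI impI)
  fix n d :: nat and P :: "complex poly" and c :: real
  assume H: "n \<ge> 1 \<and> degree P = d \<and> c > 0 \<and> (\<forall>x::complex. cmod x = 1 \<longrightarrow> (cmod (poly P x))\<^sup>2 \<le> c)"
  then have n1: "n \<ge> 1" and dP: "degree P = d" and c0: "c > 0"
    and bnd: "\<And>x. cmod x = 1 \<Longrightarrow> (cmod (poly P x))\<^sup>2 \<le> c" by auto
  define p where "p = smult (complex_of_real (1 / sqrt c)) P"
  have pz: "poly p z = poly P z / complex_of_real (sqrt c)" for z
    unfolding p_def by (simp add: divide_inverse mult.commute)
  have dp: "degree p \<le> d" unfolding p_def using dP by (simp add: degree_smult_le)
  have pn: "poly p z * cnj (poly p z) = complex_of_real ((cmod (poly p z))^2)" for z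
    by (rule complex_norm_square[symmetric])
  have pb: "(cmod (poly p z))^2 \<le> 1" if z: "cmod z = 1" for z
  proof -
    have "(cmod (poly p z))^2 = (cmod (poly P z))^2 / c"
      using c0 by (simp add: pz norm_divide power_divide)
    then show ?thesis using bnd[OF z] c0 by simp
  qed
  define R where "R = monom 1 d - p * crefl d p"
  have dR: "degree R \<le> 2 * d"
  proof -
    have "degree (monom (1::complex) d) \<le> 2 * d" using degree_monom_le[of "1::complex" d] by linarith
    moreover have "degree (p * crefl d p) \<le> 2 * d"
      using degree_mult_le[of p "crefl d p"] dp degree_crefl[of d p] by simp
    ultimately show ?thesis unfolding R_def by (rule degree_diff_le)
  qed
  have Rz: "poly R z / z^d = complex_of_real (1 - (cmod (poly p z))^2)" if z: "cmod z = 1" for z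
  proof -
    have z0: "z \<noteq> 0" using z by auto
    have "poly R z = z^d - poly p z * (z^d * cnj (poly p z))"
      unfolding R_def using poly_crefl_T[OF dp z] by (simp add: poly_monom)
    then have "poly R z / z^d = 1 - poly p z * cnj (poly p z)" using z0 by (simp add: field_simps)
    then show ?thesis using pn by simp
  qed
  have hR: "\<forall>z. cmod z = 1 \<longrightarrow> Im (poly R z / z^d) = 0 \<and> 0 \<le> Re (poly R z / z^d)"
    using Rz pb by simp
  obtain q where dq: "degree q \<le> d" and qz: "\<forall>z. cmod z = 1 \<longrightarrow> poly q z * cnj (poly q z) = poly R z / z^d"
    using FR[OF dR hR] by blast
  have npq: "\<forall>z. cmod z = 1 \<longrightarrow> poly p z * cnj (poly p z) + poly q z * cnj (poly q z) = 1"
    using qz Rz pn by simp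
  obtain Rs where Rs: "length Rs = Suc d" "\<forall>R\<in>set Rs. unitary_mat 2 R"
    "\<forall>z. qspr Rs z 0 0 = poly p z \<and> qspr Rs z 1 0 = poly q z"
    using QSP[OF dp dq npq] by blast
  define gs where "gs = circ n Rs"
  have valid: "\<forall>g\<in>set gs. valid_gate (n + 1) g" unfolding gs_def using valid_circ Rs(2) by blast
  have "length gs = Suc d + d * n" unfolding gs_def length_circ Rs(1) by simp
  moreover have "Suc d + d * n \<le> 2 * (d + 1) * n"
  proof -
    have "Suc d * 1 \<le> Suc d * n" using n1 by (intro mult_le_mono2)
    moreover have "d * n \<le> Suc d * n" by simp
    ultimately show ?thesis by simp
  qed
  ultimately have "length gs \<le> 2 * (d + 1) * n" by simp
  then have "real (length gs) \<le> real (2 * (d + 1) * n)" by (simp only: of_nat_le_iff)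
  then have len: "real (length gs) \<le> 2 * real (d + 1) * real n" by (simp add: algebra_simps)
  have bd: "blockdiag n (circuit_mat (n+1) gs) (\<lambda>j. qspr Rs (omega (2^n) ^ j))"
  proof -
    have "Rs \<noteq> []" using Rs(1) by auto
    then show ?thesis unfolding gs_def by (rule bd_circ)
  qed
  have tlb: "top_left_block n (circuit_mat (n + 1) gs)
          (\<lambda>j k. poly_mat (2 ^ n) P (U_omega (2 ^ n)) j k / complex_of_real (sqrt c))"
    unfolding top_left_block_def
  proof (intro allI impI)
    fix j k :: nat assume j: "j < 2^n" and k: "k < 2^n"
    have j2: "j < 2^(n+1)" "k < 2^(n+1)" using j k by auto
    have "circuit_mat (n+1) gs j k = (if j = k then qspr Rs (omega (2^n) ^ j) 0 0 else 0)"
      using bd j k j2 unfolding blockdiag_def by simp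
    also have "\<dots> = poly_mat (2 ^ n) P (U_omega (2 ^ n)) j k / complex_of_real (sqrt c)"
      using Rs(3) j by (simp add: poly_mat_U pz)
    finally show "circuit_mat (n+1) gs j k = poly_mat (2 ^ n) P (U_omega (2 ^ n)) j k / complex_of_real (sqrt c)" .
  qed
  show "\<exists>gs::gate list.
        (\<forall>g\<in>set gs. valid_gate (n + 1) g) \<and>
        real (length gs) \<le> 2 * real (d + 1) * real n \<and>
        top_left_block n (circuit_mat (n + 1) gs)
          (\<lambda>j k. poly_mat (2 ^ n) P (U_omega (2 ^ n)) j k / complex_of_real (sqrt c))"
    using valid len tlb by blast
qed

end
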